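(* Let $a,b,\alpha>0$ and let $f_{a,b,\alpha}$, $\widetilde{f}_{a,b,\alpha}$ and $F_{a,b,\alpha}$ be as defined in the context. Then: (a) $u\mapsto u\widetilde{f}'_{a,b,\alpha}(u)/\widetilde{f}_{a,b,\alpha}(u)$ is strictly decreasing on $(0,\infty)$; (b) $u\mapsto u{f}'_{a,b,\alpha}(u)/{f}_{a,b,\alpha}(u)$ is strictly decreasing on $(0,\infty)$; (c) $u\mapsto u{F}'_{a,b,\alpha}(u)/{F}_{a,b,\alpha}(u)$ is strictly decreasing on $(0,\infty)$; (d) $u\mapsto {F}'_{a,b,\alpha}(u)/{F}_{a,b,\alpha}(u)$ is strictly decreasing on $(0,\infty)$ (i.e. $F_{a,b,\alpha}$ is strictly log-concave).
   Context: $K_\nu$ denotes the modified Bessel function of the second kind, $K_{\nu}(u)=\int_0^{\infty}e^{-u\cosh t}\cosh(\nu t)\,dt$ for $u>0$. The gamma-gamma probability density function with parameters $a,b,\alpha>0$ is $f_{a,b,\alpha}:(0,\infty)\to(0,\infty)$, $$f_{a,b,\alpha}(u)=\frac{2(ab)^{\frac{a+b}{2}}u^{\frac{a+b}{2}-1}}{\Gamma(a)\Gamma(b)\alpha^{\frac{a+b}{2}}}K_{a-b}\left(2\sqrt{\frac{ab}{\alpha}u}\right).$$ Define $\widetilde{f}_{a,b,\alpha}(u)=f_{a,b,\alpha}\left(\frac{\alpha u^2}{4ab}\right)=\frac{2^{3-(a+b)}ab\,u^{a+b-2}}{\alpha\Gamma(a)\Gamma(b)}K_{a-b}(u)$ for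 $u>0$, and the cumulative distribution function $F_{a,b,\alpha}(u)=\int_0^u f_{a,b,\alpha}(t)\,dt$ for $u>0$. *)

theory Defs
  imports "HOL-Analysis.Analysis"
begin

definition besselK :: "real \<Rightarrow> real \<Rightarrow> real" where
  "besselK \<nu> u = integral {0..} (\<lambda>t. exp (- u * cosh t) * cosh (\<nu> * t))"

definition gg_pdf :: "real \<Rightarrow> real \<Rightarrow> real \<Rightarrow> real \<Rightarrow> real" where
  "gg_pdf a b \<alpha> u =
     2 * (a * b) powr ((a + b) / 2) * u powr ((a + b) / 2 - 1)
       / (Gamma a * Gamma b * \<alpha> powr ((a + b) / 2))
     * besselK (a - b) (2 * sqrt (a * b / \<alpha> * u))"

definition gg_pdf_tilde :: "real \<Rightarrow> real \<Rightarrow> real \<Rightarrow> real \<Rightarrow> real" where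
  "gg_pdf_tilde a b \<alpha> u = gg_pdf a b \<alpha> (\<alpha> * u\<^sup>2 / (4 * a * b))"

definition gg_cdf :: "real \<Rightarrow> real \<Rightarrow> real \<Rightarrow> real \<Rightarrow> real" where
  "gg_cdf a b \<alpha> u = integral {0..u} (gg_pdf a b \<alpha>)"

end

theory Submission imports Defs begin

lemma powr_le_exp:
  fixes m z :: real assumes "m > 0" "z \<ge> 0"
  shows "z powr m \<le> m powr m * exp z"
proof -
  have "z / m \<le> exp (z / m)"
    using exp_ge_add_one_self[of "z/m"] by linarith
  hence "(z/m) powr m \<le> exp (z/m) powr m"
    using assms by (intro powr_mono2) auto
  also have "exp (z/m) powr m = exp z"
    using assms by (simp add: powr_def)
  finally show ?thesis using assms
    by (simp add: powr_divide divide_simps mult.commute)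
qed


lemma exp_cosh_bound:
  fixes x r s :: real assumes "x > 0" "r > 0" "s \<ge> 0"
  shows "exp (- x * cosh s) \<le> r powr r * (x/2) powr (- r) * exp (- r * s)"
proof -
  define z where "z = x * cosh s"
  have ch: "cosh s \<ge> exp s / 2" using exp_gt_zero[of "-s"] unfolding cosh_field_def by (simp add: field_simps)
  have zge: "z \<ge> (x/2) * exp s" unfolding z_def using mult_left_mono[OF ch, of x] assms
    by simp
  have zpos: "z > 0" proof -
    have "(x/2) * exp s > 0" using assms by simp
    thus ?thesis using zge by linarith
  qed
  have "z powr r \<le> r powr r * exp z" using powr_le_exp[of r z] assms zpos by simp
  hence "exp (-z) \<le> r powr r * z powr (- r)"
  proof -
    assume h: "z powr r \<le> r powr r * exp z"
    have "exp (-z) = 1 / exp z" by (simp add: exp_minus field_simps)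
    also have "\<dots> \<le> r powr r / z powr r"
      using h zpos by (simp add: divide_simps)
    also have "\<dots> = r powr r * z powr (- r)" by (simp add: powr_minus divide_inverse)
    finally show ?thesis .
  qed
  also have "z powr (- r) \<le> ((x/2) * exp s) powr (- r)"
    using zge assms by (intro powr_mono2') auto
  also have "((x/2) * exp s) powr (- r) = (x/2) powr (- r) * exp (- r * s)"
  proof -
    have "((x/2) * exp s) powr (- r) = (x/2) powr (- r) * exp s powr (- r)"
      using assms powr_mult[of "x/2" "exp s" "- r"] by simp
    also have "exp s powr (- r) = exp (- r * s)" by (simp add: powr_def)
    finally show ?thesis .
  qed
  finally have "exp (-z) \<le> r powr r * ((x/2) powr (- r) * exp (- r * s))"
    using assms by (simp add: mult_left_mono)
  thus ?thesis by (simp add: z_def mult.assoc)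
qed

lemma cosh_le_exp: "s \<ge> 0 \<Longrightarrow> cosh s \<le> exp (s::real)"
  unfolding cosh_field_def using exp_le_cancel_iff[of "-s" s] by (simp add: field_simps)

lemma abs_cosh_le_exp: "\<bar>cosh (y::real)\<bar> \<le> exp \<bar>y\<bar>"
proof -
  have a: "exp (-y) \<le> exp \<bar>y\<bar>" "exp y \<le> exp \<bar>y\<bar>" by auto
  have "exp y + exp (-y) \<le> 2 * exp \<bar>y\<bar>" using a by linarith
  thus ?thesis unfolding cosh_field_def by simp
qed

lemma abs_sinh_le_exp: "\<bar>sinh (y::real)\<bar> \<le> exp \<bar>y\<bar>"
proof -
  have a: "exp (-y) \<le> exp \<bar>y\<bar>" "exp y \<le> exp \<bar>y\<bar>" "exp (-y) > 0" "exp y > 0" by auto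
  have "\<bar>exp y - exp (-y)\<bar> \<le> 2 * exp \<bar>y\<bar>" using a by linarith
  thus ?thesis unfolding sinh_field_def by simp
qed

lemma abs_sinh_le_cosh: "\<bar>sinh (y::real)\<bar> \<le> cosh y"
  using sinh_le_cosh_real[of y] sinh_le_cosh_real[of "-y"] by (simp add: abs_le_iff)

lemma dom_bound:
  fixes x \<nu> :: real and k :: nat assumes "x > 0"
  obtains C where "\<And>s. s \<ge> 0 \<Longrightarrow> cosh s ^ k * exp (\<bar>\<nu>\<bar> * s) * exp (- x * cosh s) \<le> C * exp (- s)"
proof -
  define r where "r = real k + \<bar>\<nu>\<bar> + 1"
  have r: "r > 0" unfolding r_def by simp
  define B where "B = r powr r * (x/2) powr (- r)"
  have "cosh s ^ k * exp (\<bar>\<nu>\<bar> * s) * exp (- x * cosh s) \<le> B * exp (- s)" if s: "s \<ge> 0" for s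
  proof -
    have "cosh s ^ k \<le> exp s ^ k" using cosh_le_exp[OF s] by (intro power_mono) auto
    also have "exp s ^ k = exp (real k * s)" by (simp add: exp_of_nat_mult)
    finally have 1: "cosh s ^ k \<le> exp (real k * s)" .
    have 2: "exp (- x * cosh s) \<le> B * exp (- r * s)"
      using exp_cosh_bound[OF assms r s] unfolding B_def by simp
    have "cosh s ^ k * exp (\<bar>\<nu>\<bar> * s) * exp (- x * cosh s)
          \<le> exp (real k * s) * exp (\<bar>\<nu>\<bar> * s) * (B * exp (- r * s))"
      using 1 2 by (intro mult_mono) auto
    also have "\<dots> = B * exp (real k * s + \<bar>\<nu>\<bar> * s + (- r * s))"
      by (simp only: exp_add ac_simps)
    also have "real k * s + \<bar>\<nu>\<bar> * s + (- r * s) = - s" unfolding r_def by (simp add: algebra_simps)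
    finally show ?thesis .
  qed
  thus ?thesis using that by blast
qed

lemma lebesgue_atLeast: "{0::real..} \<in> sets lebesgue"
  by simp

lemma integrable_dom:
  fixes f :: "real \<Rightarrow> real"
  assumes "continuous_on {0..} f" "\<And>s. s \<ge> 0 \<Longrightarrow> \<bar>f s\<bar> \<le> C * exp (- s)"
  shows "f integrable_on {0..}"
proof (rule measurable_bounded_by_integrable_imp_integrable)
  show "f \<in> borel_measurable (lebesgue_on {0..})"
    using assms(1) by (intro continuous_imp_measurable_on_sets_lebesgue) auto
  show "(\<lambda>s. C * exp (- s)) integrable_on {0..}"
  proof -
    have "((\<lambda>s. exp (- s)) has_integral 1) {0::real..}"
      using has_integral_exp_minus_to_infinity[of 1 0] by simp
    hence "((\<lambda>s. C * exp (- s)) has_integral C * 1) {0::real..}"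
      by (rule has_integral_mult_right)
    thus ?thesis by (auto simp: integrable_on_def)
  qed
  show "\<And>s. s \<in> {0..} \<Longrightarrow> norm (f s) \<le> C * exp (- s)" using assms(2) by auto
qed auto

lemma pos_integral:
  fixes f :: "real \<Rightarrow> real"
  assumes "continuous_on {0..} f" "f integrable_on {0..}" "\<And>s. s \<ge> 0 \<Longrightarrow> f s \<ge> 0"
    "\<And>s. s > 0 \<Longrightarrow> f s > 0"
  shows "integral {0..} f > 0"
proof -
  have c: "continuous_on {0..1} f" using assms(1) by (rule continuous_on_subset) auto
  have "integral {0..1} (\<lambda>_. 0::real) < integral {0..1} f"
    using integral_less_real[of 0 1 "\<lambda>_. 0" f] c assms(4) by auto
  also have "integral {0..1} f \<le> integral {0..} f"
    using c assms(2,3) by (intro integral_subset_le integrable_continuous_real) auto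
  finally show ?thesis by simp
qed

lemma ftc_inf:
  fixes G h :: "real \<Rightarrow> real"
  assumes der: "\<And>s. s \<ge> 0 \<Longrightarrow> (G has_real_derivative h s) (at s)"
    and cont: "continuous_on {0..} h"
    and bnd: "\<And>s. s \<ge> 0 \<Longrightarrow> \<bar>h s\<bar> \<le> C * exp (- s)"
    and G0: "G 0 = 0" and Glim: "(G \<longlongrightarrow> 0) at_top"
  shows "(h has_integral 0) {0..}"
proof -
  define g where "g = (\<lambda>s::real. C * exp (- s))"
  have e1: "((\<lambda>s. exp (- s)) has_integral 1) {0::real..}"
    using has_integral_exp_minus_to_infinity[of 1 0] by simp
  have gint: "(g has_integral C) {0..}"
    using has_integral_mult_right[OF e1, of C] unfolding g_def by simp
  have ftc: "((\<lambda>s. h s + g s) has_integral (G y + (C - C * exp (- y)))) {0..y}" if "y \<ge> 0" for y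
  proof -
    have dd: "((\<lambda>s. G s - C * exp (- s)) has_vector_derivative (h s + g s)) (at s within {0..y})"
      if "s \<in> {0..y}" for s
    proof -
      have d1: "(G has_real_derivative h s) (at s)" using der that by auto
      have d2: "((\<lambda>s. C * exp (- s)) has_real_derivative (- C * exp (- s))) (at s)"
        by (auto intro!: derivative_eq_intros)
      have "((\<lambda>s. G s - C * exp (- s)) has_real_derivative (h s - (- C * exp (- s)))) (at s)"
        by (rule DERIV_diff[OF d1 d2])
      hence "((\<lambda>s. G s - C * exp (- s)) has_real_derivative (h s + g s)) (at s)"
        unfolding g_def by simp
      thus ?thesis
        by (simp add: has_real_derivative_iff_has_vector_derivative has_vector_derivative_at_within)
    qed
    have "((\<lambda>s. h s + g s) has_integral ((G y - C * exp (- y)) - (G 0 - C * exp (- 0)))) {0..y}"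
      by (rule fundamental_theorem_of_calculus[OF that dd])
    thus ?thesis using G0 by (simp add: algebra_simps)
  qed
  have "((\<lambda>s. h s + g s) has_integral C) {0..}"
  proof (rule has_integral_to_inf)
    fix y :: real
    have "continuous_on {0..y} h" using cont by (rule continuous_on_subset) auto
    thus "(\<lambda>s. h s + g s) integrable_on {0..y}"
      unfolding g_def by (intro integrable_continuous_real continuous_intros)
  next
    have "\<forall>\<^sub>F y in at_top. integral {0..y} (\<lambda>s. h s + g s) = G y + (C - C * exp (- y))"
      using eventually_ge_at_top[of "0::real"]
      by eventually_elim (use ftc in \<open>blast intro: integral_unique\<close>)
    moreover have ex: "((\<lambda>y::real. exp (- y)) \<longlongrightarrow> 0) at_top"
      using filterlim_compose[OF exp_at_bot filterlim_uminus_at_bot_at_top] by simp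
    have "((\<lambda>y. G y + (C - C * exp (- y))) \<longlongrightarrow> 0 + (C - C * 0)) at_top"
      by (intro tendsto_add tendsto_diff tendsto_mult Glim ex tendsto_const)
    ultimately show "((\<lambda>y. integral {0..y} (\<lambda>s. h s + g s)) \<longlongrightarrow> C) at_top"
      by (simp add: tendsto_cong)
  next
    fix s :: real assume "s \<ge> 0"
    thus "h s + g s \<ge> 0" using bnd[of s] unfolding g_def by (simp add: abs_le_iff)
  qed
  from has_integral_diff[OF this gint] show ?thesis by simp
qed

lemma exp_taylor2: "0 \<le> exp z - 1 - z \<and> exp z - 1 - z \<le> z^2 * exp \<bar>z\<bar> / 2" for z :: real
proof -
  obtain t where t: "\<bar>t\<bar> \<le> \<bar>z\<bar>" "exp z = (\<Sum>m<2. z ^ m / fact m) + exp t / fact 2 * z ^ 2"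
    using Maclaurin_exp_le[of z 2] by blast
  have e: "exp z - 1 - z = exp t * z^2 / 2" using t(2) by (simp add: numeral_2_eq_2)
  have "exp t \<le> exp \<bar>z\<bar>" using t(1) by simp
  hence "exp t * z^2 \<le> exp \<bar>z\<bar> * z^2" by (rule mult_right_mono) simp
  hence "exp t * z^2 / 2 \<le> z^2 * exp \<bar>z\<bar> / 2" by (simp add: mult.commute)
  moreover have "0 \<le> exp t * z^2 / 2" by simp
  ultimately show ?thesis using e by linarith
qed

definition Kint :: "real \<Rightarrow> nat \<Rightarrow> real \<Rightarrow> real \<Rightarrow> real" where
  "Kint \<nu> k x s = exp (- x * cosh s) * cosh (\<nu> * s) * cosh s ^ k"

definition Mk :: "real \<Rightarrow> nat \<Rightarrow> real \<Rightarrow> real" where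
  "Mk \<nu> k x = integral {0..} (Kint \<nu> k x)"

lemma besselK_Mk: "besselK \<nu> = Mk \<nu> 0"
  by (simp add: fun_eq_iff besselK_def Mk_def Kint_def[abs_def])

lemma Kint_cont: "continuous_on A (Kint \<nu> k x)"
  unfolding Kint_def by (intro continuous_intros)

lemma Kint_pos: "Kint \<nu> k x s > 0"
  unfolding Kint_def by simp

lemma Kint_integrable:
  assumes "x > 0" shows "Kint \<nu> k x integrable_on {0..}"
proof -
  obtain C where C: "\<And>s. s \<ge> 0 \<Longrightarrow> cosh s ^ k * exp (\<bar>\<nu>\<bar> * s) * exp (- x * cosh s) \<le> C * exp (- s)"
    using dom_bound[OF assms, of k \<nu>] by blast
  show ?thesis
  proof (rule integrable_dom[OF Kint_cont])
    fix s :: real assume s: "s \<ge> 0"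
    have "\<bar>Kint \<nu> k x s\<bar> = exp (- x * cosh s) * cosh (\<nu> * s) * cosh s ^ k"
      unfolding Kint_def by simp
    also have "\<dots> \<le> exp (- x * cosh s) * exp (\<bar>\<nu>\<bar> * s) * cosh s ^ k"
      using abs_cosh_le_exp[of "\<nu> * s"] s by (intro mult_mono) (auto simp: abs_mult)
    also have "\<dots> \<le> C * exp (- s)" using C[OF s] by (simp add: ac_simps)
    finally show "\<bar>Kint \<nu> k x s\<bar> \<le> C * exp (- s)" .
  qed
qed

lemma Mk_pos: assumes "x > 0" shows "Mk \<nu> k x > 0"
  unfolding Mk_def using Kint_integrable[OF assms] Kint_pos
  by (intro pos_integral Kint_cont) (auto intro: less_imp_le)

lemma Kint_taylor:
  assumes "x > 0" "\<bar>y - x\<bar> \<le> x / 2"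
  shows "0 \<le> Kint \<nu> k y s - Kint \<nu> k x s + (y - x) * Kint \<nu> (Suc k) x s"
    "Kint \<nu> k y s - Kint \<nu> k x s + (y - x) * Kint \<nu> (Suc k) x s
       \<le> (y - x)^2 / 2 * Kint \<nu> (Suc (Suc k)) (x/2) s"
proof -
  define c where "c = cosh s"
  define w where "w = cosh (\<nu> * s)"
  define z where "z = - ((y - x) * c)"
  have c: "c > 0" "c \<ge> 1" unfolding c_def using cosh_real_ge_1 by auto
  have w: "w > 0" unfolding w_def by simp
  have eq: "Kint \<nu> k y s - Kint \<nu> k x s + (y - x) * Kint \<nu> (Suc k) x s
        = c ^ k * w * exp (- x * c) * (exp z - 1 - z)"
  proof -
    have "exp (- y * c) = exp (- x * c) * exp z" unfolding z_def by (simp add: exp_add[symmetric] algebra_simps)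
    thus ?thesis unfolding Kint_def c_def[symmetric] w_def[symmetric] z_def by (simp add: algebra_simps)
  qed
  have pos: "0 \<le> c ^ k * w * exp (- x * c)" using c w by simp
  show "0 \<le> Kint \<nu> k y s - Kint \<nu> k x s + (y - x) * Kint \<nu> (Suc k) x s"
    unfolding eq using pos exp_taylor2[of z] by simp
  have "c ^ k * w * exp (- x * c) * (exp z - 1 - z) \<le> c ^ k * w * exp (- x * c) * (z^2 * exp \<bar>z\<bar> / 2)"
    using pos exp_taylor2[of z] by (intro mult_left_mono) auto
  also have "\<dots> = (y - x)^2 / 2 * (c ^ (Suc (Suc k)) * w * exp (- x * c + \<bar>y - x\<bar> * c))"
  proof -
    have a: "exp \<bar>z\<bar> = exp (\<bar>y - x\<bar> * c)" using c by (simp add: z_def abs_mult)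
    have b: "exp (- x * c + \<bar>y - x\<bar> * c) = exp (- x * c) * exp (\<bar>y - x\<bar> * c)" by (rule exp_add)
    have d: "z^2 = (y - x)^2 * c^2" by (simp add: z_def power_mult_distrib)
    show ?thesis unfolding a b d by (simp add: power2_eq_square)
  qed
  also have "\<dots> \<le> (y - x)^2 / 2 * (c ^ (Suc (Suc k)) * w * exp (- (x/2) * c))"
  proof -
    have "- x * c + \<bar>y - x\<bar> * c \<le> - (x/2) * c" using assms c mult_right_mono[OF assms(2), of c] by (simp add: algebra_simps)
    thus ?thesis using c w by (intro mult_left_mono) auto
  qed
  also have "\<dots> = (y - x)^2 / 2 * Kint \<nu> (Suc (Suc k)) (x/2) s"
    unfolding Kint_def c_def w_def by (simp add: ac_simps)
  finally show "Kint \<nu> k y s - Kint \<nu> k x s + (y - x) * Kint \<nu> (Suc k) x s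
       \<le> (y - x)^2 / 2 * Kint \<nu> (Suc (Suc k)) (x/2) s" unfolding eq .
qed

lemma Mk_deriv:
  assumes x: "x > 0"
  shows "(Mk \<nu> k has_real_derivative - Mk \<nu> (Suc k) x) (at x)"
proof -
  define B where "B = Mk \<nu> (Suc (Suc k)) (x/2)"
  define R where "R = (\<lambda>y. (Mk \<nu> k y - Mk \<nu> k x) / (y - x) + Mk \<nu> (Suc k) x)"
  have bnd: "\<bar>R y\<bar> \<le> \<bar>y - x\<bar> * B / 2" if y: "y \<noteq> x" "\<bar>y - x\<bar> < x/2" for y
  proof -
    have ypos: "y > 0" using y x by linarith
    define F where "F = (\<lambda>s. Kint \<nu> k y s - Kint \<nu> k x s + (y - x) * Kint \<nu> (Suc k) x s)"
    have i1: "Kint \<nu> k y integrable_on {0..}" using Kint_integrable[OF ypos] .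
    have i2: "Kint \<nu> k x integrable_on {0..}" using Kint_integrable[OF x] .
    have i3: "(\<lambda>s. (y - x) * Kint \<nu> (Suc k) x s) integrable_on {0..}"
      using Kint_integrable[OF x] by (rule integrable_on_mult_right)
    have i4: "(\<lambda>s. (y - x)^2 / 2 * Kint \<nu> (Suc (Suc k)) (x/2) s) integrable_on {0..}"
      using Kint_integrable[of "x/2"] x by (intro integrable_on_mult_right) auto
    have iF: "F integrable_on {0..}" unfolding F_def
      by (intro integrable_add integrable_diff i1 i2 i3)
    have IF: "integral {0..} F = Mk \<nu> k y - Mk \<nu> k x + (y - x) * Mk \<nu> (Suc k) x"
      unfolding F_def Mk_def
      by (simp add: integral_add integral_diff integrable_diff i1 i2 i3 Kint_integrable x)
    have "0 \<le> integral {0..} F"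
      using iF Kint_taylor(1)[OF x, of y] y unfolding F_def
      by (intro integral_nonneg) auto
    moreover have "integral {0..} F \<le> integral {0..} (\<lambda>s. (y - x)^2 / 2 * Kint \<nu> (Suc (Suc k)) (x/2) s)"
      using iF i4 Kint_taylor(2)[OF x, of y] y unfolding F_def
      by (intro integral_le) auto
    moreover have "integral {0..} (\<lambda>s. (y - x)^2 / 2 * Kint \<nu> (Suc (Suc k)) (x/2) s) = (y - x)^2 / 2 * B"
      unfolding B_def Mk_def by simp
    ultimately have D: "0 \<le> Mk \<nu> k y - Mk \<nu> k x + (y - x) * Mk \<nu> (Suc k) x"
        "Mk \<nu> k y - Mk \<nu> k x + (y - x) * Mk \<nu> (Suc k) x \<le> (y - x)^2 / 2 * B"
      using IF by auto
    have "R y = (Mk \<nu> k y - Mk \<nu> k x + (y - x) * Mk \<nu> (Suc k) x) / (y - x)"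
      unfolding R_def using y by (simp add: field_simps)
    hence "\<bar>R y\<bar> = \<bar>Mk \<nu> k y - Mk \<nu> k x + (y - x) * Mk \<nu> (Suc k) x\<bar> / \<bar>y - x\<bar>"
      by (simp add: abs_divide)
    also have "\<dots> \<le> ((y - x)^2 / 2 * B) / \<bar>y - x\<bar>"
    proof (rule divide_right_mono)
      show "\<bar>Mk \<nu> k y - Mk \<nu> k x + (y - x) * Mk \<nu> (Suc k) x\<bar> \<le> (y - x)^2 / 2 * B"
        using D by linarith
    qed simp
    also have "\<dots> = \<bar>y - x\<bar> * B / 2"
    proof -
      have sq: "(y - x)^2 = \<bar>y - x\<bar> * \<bar>y - x\<bar>" by (simp add: power2_eq_square)
      have nz: "\<bar>y - x\<bar> \<noteq> 0" using y by simp
      show ?thesis unfolding sq using nz by (simp add: field_simps)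
    qed
    finally show ?thesis .
  qed
  have ev: "\<forall>\<^sub>F y in at x. y \<noteq> x \<and> \<bar>y - x\<bar> < x/2"
    unfolding eventually_at by (rule exI[of _ "x/2"]) (auto simp: dist_real_def x)
  have g0: "((\<lambda>y. \<bar>y - x\<bar> * B / 2) \<longlongrightarrow> 0) (at x)"
  proof -
    have "((\<lambda>y. \<bar>y - x\<bar> * B / 2) \<longlongrightarrow> \<bar>x - x\<bar> * B / 2) (at x)"
      by (intro tendsto_intros) simp
    thus ?thesis by simp
  qed
  have "(R \<longlongrightarrow> 0) (at x)"
    by (rule Lim_null_comparison[OF _ g0]) (use ev bnd in \<open>auto elim!: eventually_mono\<close>)
  hence "((\<lambda>y. R y - Mk \<nu> (Suc k) x) \<longlongrightarrow> 0 - Mk \<nu> (Suc k) x) (at x)"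
    by (intro tendsto_diff tendsto_const)
  hence "((\<lambda>y. (Mk \<nu> k y - Mk \<nu> k x) / (y - x)) \<longlongrightarrow> - Mk \<nu> (Suc k) x) (at x)"
    unfolding R_def by simp
  thus ?thesis by (simp add: has_field_derivative_iff)
qed

lemma decay_tendsto:
  fixes G :: "real \<Rightarrow> real"
  assumes "\<And>s. s \<ge> 0 \<Longrightarrow> \<bar>G s\<bar> \<le> C * exp (- s)"
  shows "(G \<longlongrightarrow> 0) at_top"
proof (rule Lim_null_comparison)
  show "\<forall>\<^sub>F s in at_top. norm (G s) \<le> C * exp (- s)"
    using eventually_ge_at_top[of "0::real"] by eventually_elim (use assms in auto)
  have ex: "((\<lambda>y::real. exp (- y)) \<longlongrightarrow> 0) at_top"
    using filterlim_compose[OF exp_at_bot filterlim_uminus_at_bot_at_top] by simp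
  show "((\<lambda>s. C * exp (- s)) \<longlongrightarrow> 0) at_top"
    using tendsto_mult[OF tendsto_const ex, of C] by simp
qed

definition Sint :: "real \<Rightarrow> real \<Rightarrow> real \<Rightarrow> real" where
  "Sint \<nu> x s = exp (- x * cosh s) * sinh s * sinh (\<nu> * s)"

definition Sk :: "real \<Rightarrow> real \<Rightarrow> real" where
  "Sk \<nu> x = integral {0..} (Sint \<nu> x)"

lemma basic_bounds:
  fixes s \<nu> :: real assumes "s \<ge> 0"
  shows "\<bar>sinh s\<bar> \<le> cosh s" "\<bar>sinh (\<nu> * s)\<bar> \<le> exp (\<bar>\<nu>\<bar> * s)" "\<bar>cosh (\<nu> * s)\<bar> \<le> exp (\<bar>\<nu>\<bar> * s)"
    "1 \<le> cosh s"
proof -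
  have a: "\<bar>\<nu> * s\<bar> = \<bar>\<nu>\<bar> * s" using assms by (simp add: abs_mult)
  show "\<bar>sinh s\<bar> \<le> cosh s" by (rule abs_sinh_le_cosh)
  show "\<bar>sinh (\<nu> * s)\<bar> \<le> exp (\<bar>\<nu>\<bar> * s)" using abs_sinh_le_exp[of "\<nu> * s"] a by simp
  show "\<bar>cosh (\<nu> * s)\<bar> \<le> exp (\<bar>\<nu>\<bar> * s)" using abs_cosh_le_exp[of "\<nu> * s"] a by simp
  show "1 \<le> cosh s" by (rule cosh_real_ge_1)
qed

lemma Sint_integrable:
  assumes "x > 0" shows "Sint \<nu> x integrable_on {0..}"
proof -
  obtain C where C: "\<And>s. s \<ge> 0 \<Longrightarrow> cosh s ^ 1 * exp (\<bar>\<nu>\<bar> * s) * exp (- x * cosh s) \<le> C * exp (- s)"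
    using dom_bound[OF assms, of 1 \<nu>] by blast
  show ?thesis
  proof (rule integrable_dom)
    show "continuous_on {0..} (Sint \<nu> x)" unfolding Sint_def by (intro continuous_intros)
    fix s :: real assume s: "s \<ge> 0"
    note b = basic_bounds(1)[OF s] basic_bounds(2,3)[of s \<nu>, OF s] basic_bounds(4)[OF s]
    have "\<bar>Sint \<nu> x s\<bar> = exp (- x * cosh s) * (\<bar>sinh s\<bar> * \<bar>sinh (\<nu> * s)\<bar>)"
      unfolding Sint_def by (simp add: abs_mult)
    also have "\<dots> \<le> exp (- x * cosh s) * (cosh s * exp (\<bar>\<nu>\<bar> * s))"
      using b by (intro mult_left_mono mult_mono) auto
    also have "\<dots> \<le> C * exp (- s)" using C[OF s] by (simp add: ac_simps)
    finally show "\<bar>Sint \<nu> x s\<bar> \<le> C * exp (- s)" .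
  qed
qed

lemma ident1:
  assumes x: "x > 0"
  shows "x * Sk \<nu> x = \<nu> * Mk \<nu> 0 x"
proof -
  obtain C where C: "\<And>s. s \<ge> 0 \<Longrightarrow> cosh s ^ 1 * exp (\<bar>\<nu>\<bar> * s) * exp (- x * cosh s) \<le> C * exp (- s)"
    using dom_bound[OF x, of 1 \<nu>] by blast
  define h where "h = (\<lambda>s. x * Sint \<nu> x s - \<nu> * Kint \<nu> 0 x s)"
  define G where "G = (\<lambda>s. - (sinh (\<nu> * s) * exp (- x * cosh s)))"
  have "(h has_integral 0) {0..}"
  proof (rule ftc_inf[where G = G and C = "(x + \<bar>\<nu>\<bar>) * C"])
    fix s :: real
    have d1: "((\<lambda>s. sinh (\<nu> * s)) has_real_derivative cosh (\<nu> * s) * \<nu>) (at s)"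
      by (auto intro!: derivative_eq_intros)
    have d2: "((\<lambda>s. exp (- x * cosh s)) has_real_derivative exp (- x * cosh s) * (- x * sinh s)) (at s)"
      by (auto intro!: derivative_eq_intros)
    have "(G has_real_derivative - (sinh (\<nu> * s) * (exp (- x * cosh s) * (- x * sinh s)) +
             cosh (\<nu> * s) * \<nu> * exp (- x * cosh s))) (at s)"
      unfolding G_def by (rule DERIV_minus[OF DERIV_mult'[OF d1 d2]])
    moreover have "- (sinh (\<nu> * s) * (exp (- x * cosh s) * (- x * sinh s)) +
             cosh (\<nu> * s) * \<nu> * exp (- x * cosh s)) = h s"
      unfolding h_def Sint_def Kint_def by (simp add: algebra_simps)
    ultimately show "(G has_real_derivative h s) (at s)" by simp
  next
    show "continuous_on {0..} h" unfolding h_def Sint_def Kint_def by (intro continuous_intros)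
  next
    fix s :: real assume s: "s \<ge> 0"
    note b = basic_bounds(1)[OF s] basic_bounds(2,3)[of s \<nu>, OF s] basic_bounds(4)[OF s]
    define E where "E = exp (- x * cosh s)"
    define P where "P = exp (\<bar>\<nu>\<bar> * s)"
    have E: "E > 0" and P: "P > 0" unfolding E_def P_def by auto
    have "\<bar>h s\<bar> \<le> \<bar>x * Sint \<nu> x s\<bar> + \<bar>\<nu> * Kint \<nu> 0 x s\<bar>" unfolding h_def by linarith
    also have "\<bar>x * Sint \<nu> x s\<bar> = x * E * (\<bar>sinh s\<bar> * \<bar>sinh (\<nu> * s)\<bar>)"
      unfolding Sint_def E_def using x by (simp add: abs_mult)
    also have "\<dots> \<le> x * E * (cosh s * P)"
      using b x E unfolding P_def by (intro mult_left_mono mult_mono) auto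
    also have "\<bar>\<nu> * Kint \<nu> 0 x s\<bar> = \<bar>\<nu>\<bar> * E * \<bar>cosh (\<nu> * s)\<bar>"
      unfolding Kint_def E_def by (simp add: abs_mult)
    also have "\<dots> \<le> \<bar>\<nu>\<bar> * E * (cosh s * P)"
    proof -
      have "P \<le> cosh s * P" using b(4) P by simp
      hence "\<bar>cosh (\<nu> * s)\<bar> \<le> cosh s * P" using b(3) unfolding P_def by linarith
      thus ?thesis using E by (intro mult_left_mono) auto
    qed
    also have "x * E * (cosh s * P) + \<bar>\<nu>\<bar> * E * (cosh s * P) = (x + \<bar>\<nu>\<bar>) * (cosh s ^ 1 * P * E)"
      by (simp add: algebra_simps)
    also have "\<dots> \<le> (x + \<bar>\<nu>\<bar>) * (C * exp (- s))"
      using C[OF s] x unfolding P_def E_def by (intro mult_left_mono) auto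
    finally show "\<bar>h s\<bar> \<le> (x + \<bar>\<nu>\<bar>) * C * exp (- s)" by (simp add: ac_simps)
  next
    show "G 0 = 0" unfolding G_def by simp
  next
    show "(G \<longlongrightarrow> 0) at_top"
    proof (rule decay_tendsto)
      fix s :: real assume s: "s \<ge> 0"
      note b = basic_bounds(1)[OF s] basic_bounds(2,3)[of s \<nu>, OF s] basic_bounds(4)[OF s]
      have "\<bar>G s\<bar> = \<bar>sinh (\<nu> * s)\<bar> * exp (- x * cosh s)" unfolding G_def by (simp add: abs_mult)
      also have "\<dots> \<le> (cosh s ^ 1 * exp (\<bar>\<nu>\<bar> * s)) * exp (- x * cosh s)"
      proof -
        have "exp (\<bar>\<nu>\<bar> * s) \<le> cosh s * exp (\<bar>\<nu>\<bar> * s)" using b(4) by simp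
        hence "\<bar>sinh (\<nu> * s)\<bar> \<le> cosh s * exp (\<bar>\<nu>\<bar> * s)" using b(2) by linarith
        thus ?thesis by (intro mult_right_mono) auto
      qed
      also have "\<dots> \<le> C * exp (- s)" using C[OF s] by simp
      finally show "\<bar>G s\<bar> \<le> C * exp (- s)" .
    qed
  qed
  hence "integral {0..} h = 0" by (rule integral_unique)
  moreover have "integral {0..} h = x * Sk \<nu> x - \<nu> * Mk \<nu> 0 x"
    unfolding h_def Sk_def Mk_def
    using Sint_integrable[OF x] Kint_integrable[OF x]
    by (simp add: integral_diff integrable_on_mult_right)
  ultimately show ?thesis by simp
qed

lemma Kint_abs_bound:
  assumes s: "s \<ge> 0"
  shows "\<bar>Kint \<nu> k x s\<bar> \<le> cosh s ^ k * exp (\<bar>\<nu>\<bar> * s) * exp (- x * cosh s)"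
proof -
  have "\<bar>Kint \<nu> k x s\<bar> = exp (- x * cosh s) * \<bar>cosh (\<nu> * s)\<bar> * cosh s ^ k"
    unfolding Kint_def by (simp add: abs_mult)
  also have "\<dots> \<le> exp (- x * cosh s) * exp (\<bar>\<nu>\<bar> * s) * cosh s ^ k"
    using basic_bounds(3)[of s \<nu>, OF s] by (intro mult_right_mono mult_left_mono) auto
  finally show ?thesis by (simp add: ac_simps)
qed

lemma Sint_abs_bound:
  assumes s: "s \<ge> 0"
  shows "\<bar>Sint \<nu> x s\<bar> \<le> cosh s ^ 1 * exp (\<bar>\<nu>\<bar> * s) * exp (- x * cosh s)"
proof -
  have "\<bar>Sint \<nu> x s\<bar> = exp (- x * cosh s) * (\<bar>sinh s\<bar> * \<bar>sinh (\<nu> * s)\<bar>)"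
    unfolding Sint_def by (simp add: abs_mult)
  also have "\<dots> \<le> exp (- x * cosh s) * (cosh s * exp (\<bar>\<nu>\<bar> * s))"
    using basic_bounds(1)[OF s] basic_bounds(2)[of s \<nu>, OF s] by (intro mult_left_mono mult_mono) auto
  finally show ?thesis by (simp add: ac_simps)
qed

lemma cosh_pow_mono:
  assumes "j \<le> k" "A \<ge> 0"
  shows "cosh s ^ j * A \<le> cosh s ^ k * (A::real)"
  using assms cosh_real_ge_1[of s] by (intro mult_right_mono power_increasing) auto

lemma ident2:
  assumes x: "x > 0"
  shows "x * Mk \<nu> 2 x = x * Mk \<nu> 0 x + Mk \<nu> 1 x + \<nu> * Sk \<nu> x"
proof -
  obtain C where C: "\<And>s. s \<ge> 0 \<Longrightarrow> cosh s ^ 2 * exp (\<bar>\<nu>\<bar> * s) * exp (- x * cosh s) \<le> C * exp (- s)"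
    using dom_bound[OF x, of 2 \<nu>] by blast
  define h where "h = (\<lambda>s. Kint \<nu> 1 x s + \<nu> * Sint \<nu> x s - x * Kint \<nu> 2 x s + x * Kint \<nu> 0 x s)"
  define G where "G = (\<lambda>s. (sinh s * cosh (\<nu> * s)) * exp (- x * cosh s))"
  have "(h has_integral 0) {0..}"
  proof (rule ftc_inf[where G = G and C = "(1 + \<bar>\<nu>\<bar> + 2 * x) * C"])
    fix s :: real
    have d0: "((\<lambda>s. sinh s) has_real_derivative cosh s) (at s)"
      by (auto intro!: derivative_eq_intros)
    have d1: "((\<lambda>s. cosh (\<nu> * s)) has_real_derivative sinh (\<nu> * s) * \<nu>) (at s)"
      by (auto intro!: derivative_eq_intros)
    have d2: "((\<lambda>s. exp (- x * cosh s)) has_real_derivative exp (- x * cosh s) * (- x * sinh s)) (at s)"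
      by (auto intro!: derivative_eq_intros)
    have "(G has_real_derivative (sinh s * cosh (\<nu> * s)) * (exp (- x * cosh s) * (- x * sinh s))
           + (sinh s * (sinh (\<nu> * s) * \<nu>) + cosh s * cosh (\<nu> * s)) * exp (- x * cosh s)) (at s)"
      unfolding G_def by (rule DERIV_mult'[OF DERIV_mult'[OF d0 d1] d2])
    moreover have "(sinh s * cosh (\<nu> * s)) * (exp (- x * cosh s) * (- x * sinh s))
           + (sinh s * (sinh (\<nu> * s) * \<nu>) + cosh s * cosh (\<nu> * s)) * exp (- x * cosh s) = h s"
    proof -
      have sq: "sinh s * sinh s = cosh s ^ 2 - 1" using cosh_square_eq[of s] by (simp add: power2_eq_square)
      have "(sinh s * cosh (\<nu> * s)) * (exp (- x * cosh s) * (- x * sinh s))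
            = - x * exp (- x * cosh s) * cosh (\<nu> * s) * (sinh s * sinh s)" by (simp add: algebra_simps)
      also have "\<dots> = - x * exp (- x * cosh s) * cosh (\<nu> * s) * (cosh s ^ 2 - 1)" by (simp add: sq)
      finally have e1: "(sinh s * cosh (\<nu> * s)) * (exp (- x * cosh s) * (- x * sinh s))
            = - x * exp (- x * cosh s) * cosh (\<nu> * s) * (cosh s ^ 2 - 1)" .
      show ?thesis unfolding e1 h_def Kint_def Sint_def by (simp add: algebra_simps)
    qed
    ultimately show "(G has_real_derivative h s) (at s)" by simp
  next
    show "continuous_on {0..} h" unfolding h_def Sint_def Kint_def by (intro continuous_intros)
  next
    fix s :: real assume s: "s \<ge> 0"
    define Q where "Q = exp (\<bar>\<nu>\<bar> * s) * exp (- x * cosh s)"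
    have Q: "Q \<ge> 0" unfolding Q_def by simp
    have b1: "\<bar>Kint \<nu> 1 x s\<bar> \<le> cosh s ^ 2 * Q"
    proof -
      have "\<bar>Kint \<nu> 1 x s\<bar> \<le> cosh s ^ 1 * Q"
        using Kint_abs_bound[OF s, of \<nu> 1 x] unfolding Q_def by (simp only: mult.assoc)
      also have "\<dots> \<le> cosh s ^ 2 * Q" by (rule cosh_pow_mono) (use Q in auto)
      finally show ?thesis .
    qed
    have b2: "\<bar>Sint \<nu> x s\<bar> \<le> cosh s ^ 2 * Q"
    proof -
      have "\<bar>Sint \<nu> x s\<bar> \<le> cosh s ^ 1 * Q"
        using Sint_abs_bound[OF s, of \<nu> x] unfolding Q_def by (simp only: mult.assoc)
      also have "\<dots> \<le> cosh s ^ 2 * Q" by (rule cosh_pow_mono) (use Q in auto)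
      finally show ?thesis .
    qed
    have b3: "\<bar>Kint \<nu> 2 x s\<bar> \<le> cosh s ^ 2 * Q"
      using Kint_abs_bound[OF s, of \<nu> 2 x] unfolding Q_def by (simp add: ac_simps)
    have b4: "\<bar>Kint \<nu> 0 x s\<bar> \<le> cosh s ^ 2 * Q"
    proof -
      have "\<bar>Kint \<nu> 0 x s\<bar> \<le> cosh s ^ 0 * Q"
        using Kint_abs_bound[OF s, of \<nu> 0 x] unfolding Q_def by (simp only: mult.assoc)
      also have "\<dots> \<le> cosh s ^ 2 * Q" by (rule cosh_pow_mono) (use Q in auto)
      finally show ?thesis .
    qed
    have "\<bar>h s\<bar> \<le> \<bar>Kint \<nu> 1 x s\<bar> + \<bar>\<nu>\<bar> * \<bar>Sint \<nu> x s\<bar> + x * \<bar>Kint \<nu> 2 x s\<bar> + x * \<bar>Kint \<nu> 0 x s\<bar>"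
    proof -
      have t: "\<bar>A + B - D + E\<bar> \<le> \<bar>A\<bar> + \<bar>B\<bar> + \<bar>D\<bar> + \<bar>E\<bar>" for A B D E :: real by (smt (verit))
      have "\<bar>\<nu> * Sint \<nu> x s\<bar> = \<bar>\<nu>\<bar> * \<bar>Sint \<nu> x s\<bar>" "\<bar>x * Kint \<nu> 2 x s\<bar> = x * \<bar>Kint \<nu> 2 x s\<bar>"
        "\<bar>x * Kint \<nu> 0 x s\<bar> = x * \<bar>Kint \<nu> 0 x s\<bar>" using x by (auto simp: abs_mult)
      thus ?thesis unfolding h_def using t[of "Kint \<nu> 1 x s" "\<nu> * Sint \<nu> x s" "x * Kint \<nu> 2 x s" "x * Kint \<nu> 0 x s"]
        by simp
    qed
    also have "\<dots> \<le> cosh s ^ 2 * Q + \<bar>\<nu>\<bar> * (cosh s ^ 2 * Q) + x * (cosh s ^ 2 * Q) + x * (cosh s ^ 2 * Q)"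
      using b1 b2 b3 b4 x by (intro add_mono mult_left_mono) auto
    also have "\<dots> = (1 + \<bar>\<nu>\<bar> + 2 * x) * (cosh s ^ 2 * Q)" by (simp add: algebra_simps)
    also have "\<dots> \<le> (1 + \<bar>\<nu>\<bar> + 2 * x) * (C * exp (- s))"
      using C[OF s] x unfolding Q_def by (intro mult_left_mono) (auto simp: ac_simps)
    finally show "\<bar>h s\<bar> \<le> (1 + \<bar>\<nu>\<bar> + 2 * x) * C * exp (- s)" by (simp add: ac_simps)
  next
    show "G 0 = 0" unfolding G_def by simp
  next
    show "(G \<longlongrightarrow> 0) at_top"
    proof (rule decay_tendsto)
      fix s :: real assume s: "s \<ge> 0"
      have "\<bar>G s\<bar> = \<bar>sinh s\<bar> * (\<bar>cosh (\<nu> * s)\<bar> * exp (- x * cosh s))" unfolding G_def by (simp add: abs_mult)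
      also have "\<dots> \<le> cosh s * (exp (\<bar>\<nu>\<bar> * s) * exp (- x * cosh s))"
        using basic_bounds(1)[OF s] basic_bounds(3)[of s \<nu>, OF s]
        by (intro mult_mono) auto
      also have "\<dots> \<le> cosh s ^ 2 * (exp (\<bar>\<nu>\<bar> * s) * exp (- x * cosh s))"
        using cosh_pow_mono[of 1 2 "exp (\<bar>\<nu>\<bar> * s) * exp (- x * cosh s)" s] by simp
      also have "\<dots> \<le> C * exp (- s)" using C[OF s] by (simp add: ac_simps)
      finally show "\<bar>G s\<bar> \<le> C * exp (- s)" .
    qed
  qed
  hence "integral {0..} h = 0" by (rule integral_unique)
  moreover have "integral {0..} h = Mk \<nu> 1 x + \<nu> * Sk \<nu> x - x * Mk \<nu> 2 x + x * Mk \<nu> 0 x"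
    unfolding h_def Sk_def Mk_def
    using Sint_integrable[OF x] Kint_integrable[OF x]
    by (simp add: integral_diff integral_add integrable_on_mult_right integrable_add integrable_diff)
  ultimately show ?thesis by simp
qed

lemma pointwise_cs:
  fixes A S s \<nu> :: real
  assumes s: "s \<ge> 0" and R: "R = sqrt (A^2 + S^2)"
  shows "A * cosh (\<nu> * s) + S * (sinh s * sinh (\<nu> * s)) \<le> R * cosh s * cosh (\<nu> * s)"
    and "s > 0 \<Longrightarrow> A^2 + S^2 > 0 \<Longrightarrow>
         A * cosh (\<nu> * s) + S * (sinh s * sinh (\<nu> * s)) < R * cosh s * cosh (\<nu> * s)"
proof -
  define w where "w = cosh (\<nu> * s)"
  define q where "q = sinh s * sinh (\<nu> * s)"
  define c where "c = cosh s"
  have w: "w > 0" unfolding w_def by simp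
  have c: "c \<ge> 1" unfolding c_def by (rule cosh_real_ge_1)
  have R0: "R \<ge> 0" unfolding R by simp
  have R2: "R^2 = A^2 + S^2" unfolding R by simp
  have cs: "(A * w + S * q)^2 \<le> (A^2 + S^2) * (w^2 + q^2)"
  proof -
    have "0 \<le> (A * q - S * w)^2" by simp
    thus ?thesis by (simp add: power2_eq_square algebra_simps)
  qed
  have shnu: "sinh (\<nu> * s) ^ 2 < w ^ 2" using cosh_square_eq[of "\<nu> * s"] unfolding w_def by simp
  have cw: "c^2 * w^2 = sinh s ^ 2 * w^2 + w^2"
    using cosh_square_eq[of s] unfolding c_def by (simp add: algebra_simps)
  have q2: "q^2 = sinh s ^ 2 * sinh (\<nu> * s) ^ 2" unfolding q_def by (simp add: power_mult_distrib)
  have le: "w^2 + q^2 \<le> c^2 * w^2"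
  proof -
    have "sinh s ^ 2 * sinh (\<nu> * s) ^ 2 \<le> sinh s ^ 2 * w ^ 2" using shnu by (intro mult_left_mono) auto
    thus ?thesis unfolding cw q2 by linarith
  qed
  have rcw: "R * c * w \<ge> 0" using R0 c w by simp
  have sq_le: "(A * w + S * q)^2 \<le> (R * c * w)^2"
  proof -
    have "(A * w + S * q)^2 \<le> (A^2 + S^2) * (w^2 + q^2)" by (rule cs)
    also have "\<dots> \<le> (A^2 + S^2) * (c^2 * w^2)" using le by (intro mult_left_mono) auto
    also have "\<dots> = (R * c * w)^2" using R2 by (simp add: power_mult_distrib)
    finally show ?thesis .
  qed
  have "\<bar>A * w + S * q\<bar> \<le> R * c * w"
    using sq_le rcw by (metis abs_le_square_iff abs_of_nonneg)
  thus "A * cosh (\<nu> * s) + S * (sinh s * sinh (\<nu> * s)) \<le> R * cosh s * cosh (\<nu> * s)"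
    unfolding w_def q_def c_def by linarith
  assume sp: "s > 0" and P: "A^2 + S^2 > 0"
  have sh: "sinh s ^ 2 > 0" using sp by simp
  have lt: "w^2 + q^2 < c^2 * w^2"
  proof -
    have "sinh s ^ 2 * sinh (\<nu> * s) ^ 2 < sinh s ^ 2 * w ^ 2" using shnu sh by (intro mult_strict_left_mono) auto
    thus ?thesis unfolding cw q2 by linarith
  qed
  have sq_lt: "(A * w + S * q)^2 < (R * c * w)^2"
  proof -
    have "(A * w + S * q)^2 \<le> (A^2 + S^2) * (w^2 + q^2)" by (rule cs)
    also have "\<dots> < (A^2 + S^2) * (c^2 * w^2)" using lt P by (intro mult_strict_left_mono) auto
    also have "\<dots> = (R * c * w)^2" using R2 by (simp add: power_mult_distrib)
    finally show ?thesis .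
  qed
  have "\<bar>A * w + S * q\<bar> < R * c * w"
  proof -
    have "\<bar>A * w + S * q\<bar>^2 < (R * c * w)^2" using sq_lt by simp
    thus ?thesis using power2_less_imp_less rcw by blast
  qed
  thus "A * cosh (\<nu> * s) + S * (sinh s * sinh (\<nu> * s)) < R * cosh s * cosh (\<nu> * s)"
    unfolding w_def q_def c_def by linarith
qed

lemma key_ineq:
  assumes x: "x > 0"
  shows "Mk \<nu> 1 x ^ 2 > Mk \<nu> 0 x ^ 2 + Sk \<nu> x ^ 2"
proof -
  define A where "A = Mk \<nu> 0 x"
  define S where "S = Sk \<nu> x"
  define R where "R = sqrt (A^2 + S^2)"
  have A: "A > 0" unfolding A_def by (rule Mk_pos[OF x])
  have P: "A^2 + S^2 > 0" using A by (simp add: add_pos_nonneg)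
  have R: "R > 0" unfolding R_def using P by simp
  define f where "f = (\<lambda>s. R * Kint \<nu> 1 x s - A * Kint \<nu> 0 x s - S * Sint \<nu> x s)"
  have feq: "f s = exp (- x * cosh s) * (R * cosh s * cosh (\<nu> * s) - (A * cosh (\<nu> * s) + S * (sinh s * sinh (\<nu> * s))))" for s
    unfolding f_def Kint_def Sint_def by (simp add: algebra_simps)
  have fint: "f integrable_on {0..}" unfolding f_def
    using Kint_integrable[OF x] Sint_integrable[OF x]
    by (intro integrable_diff integrable_on_mult_right)
  have "integral {0..} f > 0"
  proof (rule pos_integral[OF _ fint])
    show "continuous_on {0..} f" unfolding f_def Kint_def Sint_def by (intro continuous_intros)
    fix s :: real
    show "f s \<ge> 0" if s: "s \<ge> 0"
    proof -
      have "A * cosh (\<nu> * s) + S * (sinh s * sinh (\<nu> * s)) \<le> R * cosh s * cosh (\<nu> * s)"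
        using pointwise_cs(1)[OF s R_def] .
      thus ?thesis unfolding feq by (intro mult_nonneg_nonneg) auto
    qed
    show "f s > 0" if s: "s > 0"
    proof -
      have "A * cosh (\<nu> * s) + S * (sinh s * sinh (\<nu> * s)) < R * cosh s * cosh (\<nu> * s)"
        using pointwise_cs(2)[OF _ R_def s P] s by simp
      thus ?thesis unfolding feq by (intro mult_pos_pos) auto
    qed
  qed
  also have "integral {0..} f = R * Mk \<nu> 1 x - A * A - S * S"
    unfolding f_def A_def S_def Mk_def Sk_def
    using Kint_integrable[OF x] Sint_integrable[OF x]
    by (simp add: integral_diff integrable_on_mult_right integrable_diff)
  finally have f0: "0 < R * Mk \<nu> 1 x - A * A - S * S" .
  have R2: "R * R = A * A + S * S" unfolding R_def using P
    by (metis power2_eq_square real_sqrt_pow2 less_imp_le)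
  have "R * R < R * Mk \<nu> 1 x" using f0 R2 by linarith
  hence "Mk \<nu> 1 x > R" using mult_less_cancel_left_pos[OF R, of R "Mk \<nu> 1 x"] by simp
  hence "Mk \<nu> 1 x ^ 2 > R ^ 2" using R by (intro power_strict_mono) auto
  thus ?thesis using R2 unfolding A_def S_def by (simp add: power2_eq_square)
qed

definition psi :: "real \<Rightarrow> real \<Rightarrow> real" where
  "psi \<nu> x = - x * Mk \<nu> 1 x / Mk \<nu> 0 x"

lemma psi_deriv:
  assumes x: "x > 0"
  shows "\<exists>D. (psi \<nu> has_real_derivative D) (at x) \<and> D < 0"
proof -
  define M0 where "M0 = Mk \<nu> 0 x"
  define M1 where "M1 = Mk \<nu> 1 x"
  define M2 where "M2 = Mk \<nu> 2 x"
  define S where "S = Sk \<nu> x"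
  have M0: "M0 > 0" unfolding M0_def by (rule Mk_pos[OF x])
  have d0: "(Mk \<nu> 0 has_real_derivative - M1) (at x)" unfolding M1_def using Mk_deriv[OF x, of \<nu> 0] by simp
  have d1: "(Mk \<nu> 1 has_real_derivative - M2) (at x)" unfolding M2_def using Mk_deriv[OF x, of \<nu> 1]
    by (simp add: numeral_2_eq_2)
  have dneg: "((\<lambda>y. - y) has_real_derivative - 1) (at x)" by (auto intro!: derivative_eq_intros)
  have df: "((\<lambda>y. - y * Mk \<nu> 1 y) has_real_derivative ((- x) * (- M2) + (- 1) * Mk \<nu> 1 x)) (at x)"
    by (rule DERIV_mult'[OF dneg d1])
  have "(psi \<nu> has_real_derivative (((- x) * (- M2) + (- 1) * M1) * M0 - (- x * M1) * (- M1)) / M0^2) (at x)"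
    unfolding psi_def[abs_def] using DERIV_divide[OF df d0] M0 unfolding M0_def M1_def
    by (simp add: power2_eq_square)
  moreover have "(((- x) * (- M2) + (- 1) * M1) * M0 - (- x * M1) * (- M1)) / M0^2
        = x * (M0^2 + S^2 - M1^2) / M0^2"
  proof -
    have i1: "x * S = \<nu> * M0" unfolding S_def M0_def by (rule ident1[OF x])
    have i2: "x * M2 = x * M0 + M1 + \<nu> * S" unfolding S_def M0_def M1_def M2_def by (rule ident2[OF x])
    have "((- x) * (- M2) + (- 1) * M1) * M0 - (- x * M1) * (- M1) = (x * M2) * M0 - M1 * M0 - x * M1^2"
      by (simp add: algebra_simps power2_eq_square)
    also have "\<dots> = x * M0^2 + S * (\<nu> * M0) - x * M1^2" unfolding i2
      by (simp add: algebra_simps power2_eq_square)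
    also have "\<dots> = x * (M0^2 + S^2 - M1^2)" unfolding i1[symmetric]
      by (simp add: algebra_simps power2_eq_square)
    finally show ?thesis by simp
  qed
  moreover have "x * (M0^2 + S^2 - M1^2) / M0^2 < 0"
    using key_ineq[OF x, of \<nu>] x M0 unfolding M0_def M1_def S_def
    by (intro divide_neg_pos mult_pos_neg) auto
  ultimately show ?thesis by auto
qed

lemma psi_strict_dec:
  assumes "0 < x" "x < y"
  shows "psi \<nu> y < psi \<nu> x"
proof (rule DERIV_neg_imp_decreasing_open[OF assms(2)])
  fix t assume "x < t" "t < y"
  thus "\<exists>D. DERIV (psi \<nu>) t :> D \<and> D < 0" using psi_deriv[of t \<nu>] assms by auto
next
  show "continuous_on {x..y} (psi \<nu>)"
  proof (rule continuous_at_imp_continuous_on, rule ballI)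
    fix t assume "t \<in> {x..y}"
    hence "t > 0" using assms by auto
    then obtain D where "DERIV (psi \<nu>) t :> D" using psi_deriv[of t \<nu>] by auto
    thus "isCont (psi \<nu>) t" by (rule DERIV_isCont)
  qed
qed

definition ggA :: "real \<Rightarrow> real \<Rightarrow> real \<Rightarrow> real" where
  "ggA a b \<alpha> = 2 * (a * b) powr ((a + b) / 2) / (Gamma a * Gamma b * \<alpha> powr ((a + b) / 2))"

definition ggy :: "real \<Rightarrow> real \<Rightarrow> real \<Rightarrow> real \<Rightarrow> real" where
  "ggy a b \<alpha> u = 2 * sqrt (a * b / \<alpha> * u)"

definition phi :: "real \<Rightarrow> real \<Rightarrow> real \<Rightarrow> real \<Rightarrow> real" where
  "phi a b \<alpha> u = ((a + b) / 2 - 1) + psi (a - b) (ggy a b \<alpha> u) / 2"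

lemma gg_pdf_eq:
  "gg_pdf a b \<alpha> u = ggA a b \<alpha> * u powr ((a + b) / 2 - 1) * besselK (a - b) (ggy a b \<alpha> u)"
  unfolding gg_pdf_def ggA_def ggy_def by simp

lemma K_bound:
  assumes y: "y > 0" and m: "m > \<bar>\<nu>\<bar>"
  shows "Mk \<nu> 0 y \<le> m powr m * (y/2) powr (- m) / (m - \<bar>\<nu>\<bar>)"
proof -
  define B where "B = m powr m * (y/2) powr (- m)"
  define l where "l = m - \<bar>\<nu>\<bar>"
  have l: "l > 0" unfolding l_def using m by simp
  have mp: "m > 0" using m by linarith
  have hi: "((\<lambda>s. B * exp (- l * s)) has_integral B * (exp (- l * 0) / l)) {0..}"
    by (rule has_integral_mult_right[OF has_integral_exp_minus_to_infinity[OF l]])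
  have "Mk \<nu> 0 y \<le> integral {0..} (\<lambda>s. B * exp (- l * s))"
    unfolding Mk_def
  proof (rule integral_le[OF Kint_integrable[OF y]])
    show "(\<lambda>s. B * exp (- l * s)) integrable_on {0..}" using hi by (auto simp: integrable_on_def)
    fix s :: real assume "s \<in> {0..}"
    hence s: "s \<ge> 0" by simp
    have "Kint \<nu> 0 y s \<le> cosh s ^ 0 * exp (\<bar>\<nu>\<bar> * s) * exp (- y * cosh s)"
      using Kint_abs_bound[OF s, of \<nu> 0 y] by simp
    also have "\<dots> \<le> exp (\<bar>\<nu>\<bar> * s) * (B * exp (- m * s))"
      using exp_cosh_bound[OF y mp s] unfolding B_def by simp
    also have "\<dots> = B * exp (- l * s)"
      unfolding l_def by (simp add: exp_add[symmetric] algebra_simps)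
    finally show "Kint \<nu> 0 y s \<le> B * exp (- l * s)" .
  qed
  also have "\<dots> = B / l" using integral_unique[OF hi] by simp
  finally show ?thesis unfolding B_def l_def .
qed

context
  fixes a b \<alpha> :: real
  assumes a: "a > 0" and b: "b > 0" and al: "\<alpha> > 0"
begin

lemma ggA_pos: "ggA a b \<alpha> > 0"
  unfolding ggA_def using a b al by (auto intro!: divide_pos_pos mult_pos_pos Gamma_real_pos)

lemma ggy_pos: "u > 0 \<Longrightarrow> ggy a b \<alpha> u > 0"
  unfolding ggy_def using a b al by simp

lemma ggy_strict_mono: "0 < u \<Longrightarrow> u < v \<Longrightarrow> ggy a b \<alpha> u < ggy a b \<alpha> v"
proof -
  assume "0 < u" "u < v"
  hence "a * b / \<alpha> * u < a * b / \<alpha> * v" using a b al by (intro mult_strict_left_mono) auto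
  thus ?thesis unfolding ggy_def by simp
qed

lemma pdf_pos: "u > 0 \<Longrightarrow> gg_pdf a b \<alpha> u > 0"
  unfolding gg_pdf_eq besselK_Mk using ggA_pos ggy_pos Mk_pos by simp

lemma phi_strict_dec: "0 < u \<Longrightarrow> u < v \<Longrightarrow> phi a b \<alpha> v < phi a b \<alpha> u"
  unfolding phi_def using psi_strict_dec[OF ggy_pos ggy_strict_mono] by simp

lemma pdf_deriv:
  assumes u: "u > 0"
  shows "\<exists>D. (gg_pdf a b \<alpha> has_real_derivative D) (at u) \<and> u * D / gg_pdf a b \<alpha> u = phi a b \<alpha> u"
proof -
  define q where "q = (a + b) / 2 - 1"
  define A where "A = ggA a b \<alpha>"
  define c0 where "c0 = a * b / \<alpha>"
  define y where "y = ggy a b \<alpha> u"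
  have c0: "c0 > 0" unfolding c0_def using a b al by simp
  have y: "y > 0" unfolding y_def using ggy_pos[OF u] .
  have yeq: "y = 2 * sqrt (c0 * u)" unfolding y_def ggy_def c0_def by simp
  have f_eq: "gg_pdf a b \<alpha> = (\<lambda>v. A * v powr q * besselK (a - b) (ggy a b \<alpha> v))"
    unfolding A_def q_def by (simp add: fun_eq_iff gg_pdf_eq)
  have dK: "(besselK (a - b) has_real_derivative - Mk (a - b) 1 y) (at y)"
    unfolding besselK_Mk using Mk_deriv[OF y, of "a - b" 0] by simp
  have dy: "(ggy a b \<alpha> has_real_derivative c0 / sqrt (c0 * u)) (at u)"
  proof -
    have "((\<lambda>v. 2 * sqrt (c0 * v)) has_real_derivative 2 * (inverse (sqrt (c0 * u)) / 2 * c0)) (at u)"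
      using c0 u by (intro DERIV_cmult DERIV_chain2[OF DERIV_real_sqrt] DERIV_cmult_Id) auto
    moreover have "ggy a b \<alpha> = (\<lambda>v. 2 * sqrt (c0 * v))" unfolding ggy_def c0_def by (simp add: fun_eq_iff)
    ultimately show ?thesis by (simp add: field_simps)
  qed
  have dKy: "((\<lambda>v. besselK (a - b) (ggy a b \<alpha> v)) has_real_derivative
              - Mk (a - b) 1 y * (c0 / sqrt (c0 * u))) (at u)"
    using DERIV_chain2[OF dK[unfolded y_def] dy] unfolding y_def .
  have dp: "((\<lambda>v. v powr q) has_real_derivative q * u powr (q - 1)) (at u)"
    using has_real_derivative_powr[OF u, of q] .
  have dAp: "((\<lambda>v. A * v powr q) has_real_derivative A * (q * u powr (q - 1))) (at u)"
    by (rule DERIV_cmult[OF dp])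
  have dF: "(gg_pdf a b \<alpha> has_real_derivative
       (A * u powr q) * (- Mk (a - b) 1 y * (c0 / sqrt (c0 * u))) + A * (q * u powr (q - 1)) * besselK (a - b) y) (at u)"
    unfolding f_eq y_def by (rule DERIV_mult'[OF dAp dKy[unfolded y_def]])
  have K: "besselK (a - b) y > 0" unfolding besselK_Mk using Mk_pos[OF y] .
  have A: "A > 0" unfolding A_def by (rule ggA_pos)
  have up: "u powr q > 0" using u by simp
  have fu: "gg_pdf a b \<alpha> u = A * u powr q * besselK (a - b) y"
    unfolding f_eq y_def by simp
  have sq: "sqrt (c0 * u) * sqrt (c0 * u) = c0 * u" using c0 u by simp
  have sqp: "sqrt (c0 * u) > 0" using c0 u by simp
  have pw: "u * u powr (q - 1) = u powr q"
    using u by (simp add: powr_diff field_simps)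
  have "u * ((A * u powr q) * (- Mk (a - b) 1 y * (c0 / sqrt (c0 * u))) + A * (q * u powr (q - 1)) * besselK (a - b) y)
        / gg_pdf a b \<alpha> u = q + psi (a - b) y / 2"
  proof -
    have e1: "u * (c0 / sqrt (c0 * u)) = sqrt (c0 * u)"
    proof -
      have "u * (c0 / sqrt (c0 * u)) = (c0 * u) / sqrt (c0 * u)" by simp
      also have "\<dots> = sqrt (c0 * u)" by (rule real_div_sqrt) (use c0 u in simp)
      finally show ?thesis .
    qed
    have "u * ((A * u powr q) * (- Mk (a - b) 1 y * (c0 / sqrt (c0 * u))) + A * (q * u powr (q - 1)) * besselK (a - b) y)
        = A * u powr q * (- Mk (a - b) 1 y * (u * (c0 / sqrt (c0 * u))) + q * besselK (a - b) y)"
      using pw by (simp add: algebra_simps)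
    also have "\<dots> = A * u powr q * (- Mk (a - b) 1 y * (y / 2) + q * besselK (a - b) y)"
      unfolding e1 yeq by simp
    finally have num: "u * ((A * u powr q) * (- Mk (a - b) 1 y * (c0 / sqrt (c0 * u))) + A * (q * u powr (q - 1)) * besselK (a - b) y)
        = A * u powr q * (- Mk (a - b) 1 y * (y / 2) + q * besselK (a - b) y)" .
    show ?thesis unfolding num fu unfolding psi_def besselK_Mk
      using A up Mk_pos[OF y, of "a - b" 0] by (simp add: field_simps)
  qed
  thus ?thesis using dF unfolding phi_def y_def q_def by blast
qed

lemma pdf_cont: "u > 0 \<Longrightarrow> isCont (gg_pdf a b \<alpha>) u"
  using pdf_deriv[of u] DERIV_isCont by blast

lemma pdf_bound:
  obtains C where "C \<ge> 0" "\<And>u. u > 0 \<Longrightarrow> gg_pdf a b \<alpha> u \<le> C * u powr (min a b / 2 - 1)"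
proof -
  define m where "m = max a b"
  define \<nu> where "\<nu> = a - b"
  define c0 where "c0 = a * b / \<alpha>"
  define A where "A = ggA a b \<alpha>"
  define q where "q = (a + b) / 2 - 1"
  have c0: "c0 > 0" unfolding c0_def using a b al by simp
  have m: "m > \<bar>\<nu>\<bar>" unfolding m_def \<nu>_def using a b by auto
  have l: "m - \<bar>\<nu>\<bar> > 0" using m by simp
  have A: "A > 0" unfolding A_def by (rule ggA_pos)
  define C where "C = A * (m powr m * c0 powr (- m / 2) / (m - \<bar>\<nu>\<bar>))"
  have C: "C \<ge> 0" unfolding C_def using A l by simp
  have "gg_pdf a b \<alpha> u \<le> C * u powr (min a b / 2 - 1)" if u: "u > 0" for u
  proof -
    define y where "y = ggy a b \<alpha> u"
    have y: "y > 0" unfolding y_def by (rule ggy_pos[OF u])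
    have y2: "y / 2 = (c0 * u) powr (1/2)" unfolding y_def ggy_def c0_def
    proof -
      have "(c0 * u) powr (1/2) = sqrt (c0 * u)" using c0 u by (intro powr_half_sqrt) simp
      thus "2 * sqrt (a * b / \<alpha> * u) / 2 = (a * b / \<alpha> * u) powr (1 / 2)" unfolding c0_def by simp
    qed
    have yp: "(y/2) powr (- m) = c0 powr (- m / 2) * u powr (- m / 2)"
      unfolding y2 using c0 u by (simp add: powr_powr powr_mult)
    have "gg_pdf a b \<alpha> u = A * u powr q * Mk \<nu> 0 y"
      unfolding gg_pdf_eq A_def q_def y_def \<nu>_def besselK_Mk ..
    also have "\<dots> \<le> A * u powr q * (m powr m * (y/2) powr (- m) / (m - \<bar>\<nu>\<bar>))"
      using K_bound[OF y m] A u by (intro mult_left_mono) auto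
    also have "\<dots> = C * (u powr q * u powr (- m / 2))"
      unfolding yp C_def by (simp add: algebra_simps)
    also have "u powr q * u powr (- m / 2) = u powr (min a b / 2 - 1)"
    proof -
      have "q + - m / 2 = min a b / 2 - 1" unfolding q_def m_def by (auto simp: max_def min_def field_simps)
      thus ?thesis by (simp add: powr_add[symmetric])
    qed
    finally show ?thesis .
  qed
  thus ?thesis using that C by blast
qed

lemma pdf_integrable:
  assumes t: "t \<ge> 0"
  shows "gg_pdf a b \<alpha> integrable_on {0..t}"
proof -
  obtain C where C: "C \<ge> 0" "\<And>u. u > 0 \<Longrightarrow> gg_pdf a b \<alpha> u \<le> C * u powr (min a b / 2 - 1)"
    using pdf_bound by blast
  have ex: "min a b / 2 - 1 > -1" using a b by simp
  have gi: "(\<lambda>u. C * u powr (min a b / 2 - 1)) integrable_on {0<..t}"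
  proof -
    have "(\<lambda>u. C * u powr (min a b / 2 - 1)) integrable_on {0..t}"
      using integrable_on_powr_from_0[OF ex t] by (rule integrable_on_mult_right)
    moreover have "{0..t} = insert 0 {0<..t}" using t by auto
    ultimately show ?thesis by (simp add: integrable_on_insert_iff)
  qed
  have "gg_pdf a b \<alpha> integrable_on {0<..t}"
  proof (rule measurable_bounded_by_integrable_imp_integrable[OF _ gi])
    have "continuous_on {0<..t} (gg_pdf a b \<alpha>)"
      by (intro continuous_at_imp_continuous_on ballI pdf_cont) auto
    thus "gg_pdf a b \<alpha> \<in> borel_measurable (lebesgue_on {0<..t})"
      by (intro continuous_imp_measurable_on_sets_lebesgue) auto
    fix u assume "u \<in> {0<..t}"
    hence u: "u > 0" by simp
    show "norm (gg_pdf a b \<alpha> u) \<le> C * u powr (min a b / 2 - 1)"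
      using C(2)[OF u] pdf_pos[OF u] by simp
  qed auto
  moreover have "{0..t} = insert 0 {0<..t}" using t by auto
  ultimately show ?thesis by (simp add: integrable_on_insert_iff)
qed

lemma cdf_eq: "gg_cdf a b \<alpha> = (\<lambda>t. integral {0..t} (gg_pdf a b \<alpha>))"
  by (simp add: fun_eq_iff gg_cdf_def)

lemma cdf_deriv:
  assumes u: "u > 0"
  shows "(gg_cdf a b \<alpha> has_real_derivative gg_pdf a b \<alpha> u) (at u)"
proof -
  have i: "gg_pdf a b \<alpha> integrable_on {0..u+1}" using pdf_integrable[of "u+1"] u by simp
  have c: "continuous (at u within ({0..u+1} - {})) (gg_pdf a b \<alpha>)"
    using pdf_cont[OF u] by (rule continuous_at_imp_continuous_at_within)
  have "((\<lambda>t. integral {0..t} (gg_pdf a b \<alpha>)) has_vector_derivative gg_pdf a b \<alpha> u) (at u within ({0..u+1} - {}))"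
    by (rule integral_has_vector_derivative_continuous_at[OF i _ _ c]) (use u in auto)
  moreover have "at u within ({0..u+1} - {}) = at u"
    using u by (intro at_within_interior) auto
  ultimately show ?thesis
    unfolding cdf_eq by (simp add: has_real_derivative_iff_has_vector_derivative)
qed

lemma cdf_cont: "t \<ge> 0 \<Longrightarrow> continuous_on {0..t} (gg_cdf a b \<alpha>)"
  unfolding cdf_eq by (rule indefinite_integral_continuous_1[OF pdf_integrable])

lemma cdf0: "gg_cdf a b \<alpha> 0 = 0"
  unfolding gg_cdf_def by simp

lemma cdf_pos:
  assumes u: "u > 0" shows "gg_cdf a b \<alpha> u > 0"
proof -
  have "gg_cdf a b \<alpha> 0 < gg_cdf a b \<alpha> u"
  proof (rule DERIV_pos_imp_increasing_open[OF u])
    fix t :: real assume "0 < t" "t < u"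
    thus "\<exists>y. DERIV (gg_cdf a b \<alpha>) t :> y \<and> 0 < y"
      using cdf_deriv pdf_pos by blast
  next
    show "continuous_on {0..u} (gg_cdf a b \<alpha>)" using cdf_cont u by simp
  qed
  thus ?thesis using cdf0 by simp
qed

lemma P_cont:
  assumes u: "u \<ge> 0"
  shows "continuous_on {0..u} (\<lambda>t. t * gg_pdf a b \<alpha> t)"
proof (unfold continuous_on_eq_continuous_within, rule ballI)
  fix t assume t: "t \<in> {0..u}"
  show "continuous (at t within {0..u}) (\<lambda>t. t * gg_pdf a b \<alpha> t)"
  proof (cases "t = 0")
    case False
    hence "t > 0" using t by simp
    hence "isCont (\<lambda>t. t * gg_pdf a b \<alpha> t) t" using pdf_cont by (intro continuous_intros) auto
    thus ?thesis by (rule continuous_at_imp_continuous_at_within)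
  next
    case True
    obtain C where C: "C \<ge> 0" "\<And>u. u > 0 \<Longrightarrow> gg_pdf a b \<alpha> u \<le> C * u powr (min a b / 2 - 1)"
      using pdf_bound by blast
    define p where "p = min a b / 2"
    have p: "p > 0" unfolding p_def using a b by simp
    have ev: "\<forall>\<^sub>F t in at 0 within {0..u}. t \<in> {0..u} \<and> t \<noteq> 0"
      unfolding eventually_at_filter by simp
    have lim: "((\<lambda>t. C * t powr p) \<longlongrightarrow> 0) (at 0 within {0..u})"
    proof -
      have "((\<lambda>t::real. t powr p) \<longlongrightarrow> 0) (at 0 within {0..u})"
      proof (rule tendsto_zero_powrI)
        show "((\<lambda>t::real. t) \<longlongrightarrow> 0) (at 0 within {0..u})" by (rule tendsto_ident_at)
        show "((\<lambda>t. p) \<longlongrightarrow> p) (at 0 within {0..u})" by simp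
        show "\<forall>\<^sub>F t in at 0 within {0..u}. 0 \<le> t" using ev by eventually_elim auto
      qed (rule p)
      thus ?thesis using tendsto_mult[OF tendsto_const, of _ 0 _ C] by simp
    qed
    have "((\<lambda>t. t * gg_pdf a b \<alpha> t) \<longlongrightarrow> 0) (at 0 within {0..u})"
    proof (rule Lim_null_comparison[OF _ lim])
      show "\<forall>\<^sub>F t in at 0 within {0..u}. norm (t * gg_pdf a b \<alpha> t) \<le> C * t powr p"
        using ev
      proof eventually_elim
        case (elim t)
        hence tp: "t > 0" by auto
        have "norm (t * gg_pdf a b \<alpha> t) = t * gg_pdf a b \<alpha> t" using tp pdf_pos[OF tp] by simp
        also have "\<dots> \<le> t * (C * t powr (p - 1))" using C(2)[OF tp] tp unfolding p_def
          by (intro mult_left_mono) auto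
        also have "\<dots> = C * t powr p" using powr_mult_base[OF less_imp_le[OF tp], of "p - 1"] by simp
        finally show ?case .
      qed
    qed
    thus ?thesis unfolding continuous_within True by simp
  qed
qed

lemma H_pos:
  assumes u: "u > 0"
  shows "u * gg_pdf a b \<alpha> u - (1 + phi a b \<alpha> u) * gg_cdf a b \<alpha> u > 0"
proof -
  define H where "H = (\<lambda>t. t * gg_pdf a b \<alpha> t - (1 + phi a b \<alpha> u) * gg_cdf a b \<alpha> t)"
  have "H 0 < H u"
  proof (rule DERIV_pos_imp_increasing_open[OF u])
    fix t :: real assume t: "0 < t" "t < u"
    obtain Df where Df: "(gg_pdf a b \<alpha> has_real_derivative Df) (at t)"
      "t * Df / gg_pdf a b \<alpha> t = phi a b \<alpha> t"
      using pdf_deriv[OF t(1)] by blast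
    have ft: "gg_pdf a b \<alpha> t > 0" using pdf_pos t by simp
    have tDf: "t * Df = phi a b \<alpha> t * gg_pdf a b \<alpha> t" using Df(2) ft by (simp add: field_simps)
    have dI: "((\<lambda>t. t) has_real_derivative 1) (at t)" by (rule DERIV_ident)
    have "(H has_real_derivative (t * Df + 1 * gg_pdf a b \<alpha> t) - (1 + phi a b \<alpha> u) * gg_pdf a b \<alpha> t) (at t)"
      unfolding H_def by (intro DERIV_diff DERIV_mult'[OF dI Df(1)] DERIV_cmult cdf_deriv t(1))
    moreover have "(t * Df + 1 * gg_pdf a b \<alpha> t) - (1 + phi a b \<alpha> u) * gg_pdf a b \<alpha> t
          = gg_pdf a b \<alpha> t * (phi a b \<alpha> t - phi a b \<alpha> u)"
      unfolding tDf by (simp add: algebra_simps)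
    moreover have "gg_pdf a b \<alpha> t * (phi a b \<alpha> t - phi a b \<alpha> u) > 0"
      using ft phi_strict_dec[OF t] by simp
    ultimately show "\<exists>y. DERIV H t :> y \<and> 0 < y" by auto
  next
    show "continuous_on {0..u} H" unfolding H_def
      using u by (intro continuous_on_diff[OF P_cont continuous_on_mult[OF continuous_on_const cdf_cont]]) auto
  qed
  moreover have "H 0 = 0" unfolding H_def cdf0 by simp
  ultimately show ?thesis unfolding H_def by linarith
qed

lemma G_deriv:
  assumes u: "u > 0"
  shows "\<exists>D. ((\<lambda>v. v * gg_pdf a b \<alpha> v / gg_cdf a b \<alpha> v) has_real_derivative D) (at u) \<and> D < 0"
proof -
  obtain Df where Df: "(gg_pdf a b \<alpha> has_real_derivative Df) (at u)"
      "u * Df / gg_pdf a b \<alpha> u = phi a b \<alpha> u"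
    using pdf_deriv[OF u] by blast
  define f where "f = gg_pdf a b \<alpha> u"
  define F where "F = gg_cdf a b \<alpha> u"
  have f: "f > 0" unfolding f_def using pdf_pos[OF u] .
  have F: "F > 0" unfolding F_def using cdf_pos[OF u] .
  have uDf: "u * Df = phi a b \<alpha> u * f" using Df(2) f unfolding f_def by (simp add: field_simps)
  have dI: "((\<lambda>t. t) has_real_derivative 1) (at u)" by (rule DERIV_ident)
  have dP: "((\<lambda>v. v * gg_pdf a b \<alpha> v) has_real_derivative u * Df + 1 * gg_pdf a b \<alpha> u) (at u)"
    by (rule DERIV_mult'[OF dI Df(1)])
  have "((\<lambda>v. v * gg_pdf a b \<alpha> v / gg_cdf a b \<alpha> v) has_real_derivative
         ((u * Df + 1 * gg_pdf a b \<alpha> u) * gg_cdf a b \<alpha> u - u * gg_pdf a b \<alpha> u * gg_pdf a b \<alpha> u)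
           / (gg_cdf a b \<alpha> u)^2) (at u)"
    using DERIV_divide[OF dP cdf_deriv[OF u]] F unfolding F_def by (simp add: power2_eq_square)
  moreover have "((u * Df + 1 * gg_pdf a b \<alpha> u) * gg_cdf a b \<alpha> u - u * gg_pdf a b \<alpha> u * gg_pdf a b \<alpha> u)
           / (gg_cdf a b \<alpha> u)^2 < 0"
  proof -
    have "(u * Df + 1 * f) * F - u * f * f = - f * (u * f - (1 + phi a b \<alpha> u) * F)"
      unfolding uDf by (simp add: algebra_simps)
    moreover have "- f * (u * f - (1 + phi a b \<alpha> u) * F) < 0"
      using f H_pos[OF u] unfolding f_def F_def by (simp add: mult_pos_pos)
    ultimately show ?thesis using F unfolding f_def F_def by (simp add: divide_neg_pos)
  qed
  ultimately show ?thesis by blast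
qed

lemma G_strict_dec:
  assumes "0 < x" "x < y"
  shows "y * gg_pdf a b \<alpha> y / gg_cdf a b \<alpha> y < x * gg_pdf a b \<alpha> x / gg_cdf a b \<alpha> x"
proof -
  let ?G = "\<lambda>v. v * gg_pdf a b \<alpha> v / gg_cdf a b \<alpha> v"
  have "?G x > ?G y"
  proof (rule DERIV_neg_imp_decreasing_open[OF assms(2)])
    fix t assume "x < t" "t < y"
    thus "\<exists>D. DERIV ?G t :> D \<and> D < 0" using G_deriv[of t] assms by auto
  next
    show "continuous_on {x..y} ?G"
    proof (rule continuous_at_imp_continuous_on, rule ballI)
      fix t assume "t \<in> {x..y}"
      hence "t > 0" using assms by auto
      then obtain D where "DERIV ?G t :> D" using G_deriv[of t] by auto
      thus "isCont ?G t" by (rule DERIV_isCont)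
    qed
  qed
  thus ?thesis by simp
qed

lemma ratio_b:
  assumes u: "u > 0"
  shows "u * deriv (gg_pdf a b \<alpha>) u / gg_pdf a b \<alpha> u = phi a b \<alpha> u"
proof -
  obtain Df where Df: "(gg_pdf a b \<alpha> has_real_derivative Df) (at u)"
      "u * Df / gg_pdf a b \<alpha> u = phi a b \<alpha> u"
    using pdf_deriv[OF u] by blast
  show ?thesis using DERIV_imp_deriv[OF Df(1)] Df(2) by simp
qed

lemma ratio_a:
  assumes u: "u > 0"
  shows "u * deriv (gg_pdf_tilde a b \<alpha>) u / gg_pdf_tilde a b \<alpha> u
         = 2 * phi a b \<alpha> (\<alpha> * u^2 / (4 * a * b))"
proof -
  define w where "w = \<alpha> * u^2 / (4 * a * b)"
  have w: "w > 0" unfolding w_def using a b al u by simp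
  obtain Df where Df: "(gg_pdf a b \<alpha> has_real_derivative Df) (at w)"
      "w * Df / gg_pdf a b \<alpha> w = phi a b \<alpha> w"
    using pdf_deriv[OF w] by blast
  have dw: "((\<lambda>u. \<alpha> * u^2 / (4 * a * b)) has_real_derivative \<alpha> * (2 * u) / (4 * a * b)) (at u)"
    using a b by (auto intro!: derivative_eq_intros)
  have ft: "gg_pdf_tilde a b \<alpha> = (\<lambda>u. gg_pdf a b \<alpha> (\<alpha> * u^2 / (4 * a * b)))"
    by (simp add: fun_eq_iff gg_pdf_tilde_def)
  have "(gg_pdf_tilde a b \<alpha> has_real_derivative Df * (\<alpha> * (2 * u) / (4 * a * b))) (at u)"
    unfolding ft using DERIV_chain2[OF Df(1)[unfolded w_def] dw] .
  hence "deriv (gg_pdf_tilde a b \<alpha>) u = Df * (\<alpha> * (2 * u) / (4 * a * b))" by (rule DERIV_imp_deriv)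
  moreover have "u * (Df * (\<alpha> * (2 * u) / (4 * a * b))) = 2 * (w * Df)"
    unfolding w_def by (simp add: power2_eq_square field_simps)
  moreover have "gg_pdf_tilde a b \<alpha> u = gg_pdf a b \<alpha> w" unfolding ft w_def by simp
  ultimately have "u * deriv (gg_pdf_tilde a b \<alpha>) u / gg_pdf_tilde a b \<alpha> u = 2 * (w * Df / gg_pdf a b \<alpha> w)"
    by simp
  hence "u * deriv (gg_pdf_tilde a b \<alpha>) u / gg_pdf_tilde a b \<alpha> u = 2 * phi a b \<alpha> w" by (simp only: Df(2))
  thus ?thesis unfolding w_def .
qed

lemma w_strict_mono:
  assumes "0 < x" "x < y"
  shows "\<alpha> * x^2 / (4 * a * b) < \<alpha> * y^2 / (4 * a * b)"
proof -
  have "x^2 < y^2" using assms by (intro power_strict_mono) auto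
  thus ?thesis using a b al by (simp add: divide_strict_right_mono)
qed

lemma ratio_c:
  assumes u: "u > 0"
  shows "u * deriv (gg_cdf a b \<alpha>) u / gg_cdf a b \<alpha> u = u * gg_pdf a b \<alpha> u / gg_cdf a b \<alpha> u"
  using DERIV_imp_deriv[OF cdf_deriv[OF u]] by simp

lemma ratio_d:
  assumes u: "u > 0"
  shows "deriv (gg_cdf a b \<alpha>) u / gg_cdf a b \<alpha> u = (u * gg_pdf a b \<alpha> u / gg_cdf a b \<alpha> u) / u"
  using DERIV_imp_deriv[OF cdf_deriv[OF u]] u by simp

end

theorem theorem5:
  fixes a b \<alpha> :: real
  assumes "a > 0" and "b > 0" and "\<alpha> > 0"
  shows "strict_antimono_on {0<..}
           (\<lambda>u. u * deriv (gg_pdf_tilde a b \<alpha>) u / gg_pdf_tilde a b \<alpha> u)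
       \<and> strict_antimono_on {0<..}
           (\<lambda>u. u * deriv (gg_pdf a b \<alpha>) u / gg_pdf a b \<alpha> u)
       \<and> strict_antimono_on {0<..}
           (\<lambda>u. u * deriv (gg_cdf a b \<alpha>) u / gg_cdf a b \<alpha> u)
       \<and> strict_antimono_on {0<..}
           (\<lambda>u. deriv (gg_cdf a b \<alpha>) u / gg_cdf a b \<alpha> u)"
proof (intro conjI)
  note A = assms
  show "strict_antimono_on {0<..} (\<lambda>u. u * deriv (gg_pdf_tilde a b \<alpha>) u / gg_pdf_tilde a b \<alpha> u)"
  proof (unfold monotone_on_def, intro ballI impI)
    fix x y :: real assume x: "x \<in> {0<..}" and y: "y \<in> {0<..}" and xy: "x < y"
    hence x0: "x > 0" and y0: "y > 0" by auto
    have wx: "\<alpha> * x^2 / (4 * a * b) > 0" using A x0 by simp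
    show "y * deriv (gg_pdf_tilde a b \<alpha>) y / gg_pdf_tilde a b \<alpha> y
        < x * deriv (gg_pdf_tilde a b \<alpha>) x / gg_pdf_tilde a b \<alpha> x"
      unfolding ratio_a[OF A x0] ratio_a[OF A y0]
      using phi_strict_dec[OF A wx w_strict_mono[OF A x0 xy]] by simp
  qed
  show "strict_antimono_on {0<..} (\<lambda>u. u * deriv (gg_pdf a b \<alpha>) u / gg_pdf a b \<alpha> u)"
  proof (unfold monotone_on_def, intro ballI impI)
    fix x y :: real assume x: "x \<in> {0<..}" and y: "y \<in> {0<..}" and xy: "x < y"
    hence x0: "x > 0" and y0: "y > 0" by auto
    show "y * deriv (gg_pdf a b \<alpha>) y / gg_pdf a b \<alpha> y < x * deriv (gg_pdf a b \<alpha>) x / gg_pdf a b \<alpha> x"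
      unfolding ratio_b[OF A x0] ratio_b[OF A y0] using phi_strict_dec[OF A x0 xy] .
  qed
  show "strict_antimono_on {0<..} (\<lambda>u. u * deriv (gg_cdf a b \<alpha>) u / gg_cdf a b \<alpha> u)"
  proof (unfold monotone_on_def, intro ballI impI)
    fix x y :: real assume x: "x \<in> {0<..}" and y: "y \<in> {0<..}" and xy: "x < y"
    hence x0: "x > 0" and y0: "y > 0" by auto
    show "y * deriv (gg_cdf a b \<alpha>) y / gg_cdf a b \<alpha> y < x * deriv (gg_cdf a b \<alpha>) x / gg_cdf a b \<alpha> x"
      unfolding ratio_c[OF A x0] ratio_c[OF A y0] using G_strict_dec[OF A x0 xy] .
  qed
  show "strict_antimono_on {0<..} (\<lambda>u. deriv (gg_cdf a b \<alpha>) u / gg_cdf a b \<alpha> u)"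
  proof (unfold monotone_on_def, intro ballI impI)
    fix x y :: real assume x: "x \<in> {0<..}" and y: "y \<in> {0<..}" and xy: "x < y"
    hence x0: "x > 0" and y0: "y > 0" by auto
    define Gx where "Gx = x * gg_pdf a b \<alpha> x / gg_cdf a b \<alpha> x"
    define Gy where "Gy = y * gg_pdf a b \<alpha> y / gg_cdf a b \<alpha> y"
    have Gy: "Gy > 0" unfolding Gy_def using pdf_pos[OF A y0] cdf_pos[OF A y0] y0 by simp
    have GG: "Gy < Gx" unfolding Gx_def Gy_def using G_strict_dec[OF A x0 xy] .
    have "Gy / y < Gy / x" using Gy x0 xy by (simp add: divide_strict_left_mono)
    also have "Gy / x < Gx / x" using GG x0 by (simp add: divide_strict_right_mono)
    finally have "Gy / y < Gx / x" .
    thus "deriv (gg_cdf a b \<alpha>) y / gg_cdf a b \<alpha> y < deriv (gg_cdf a b \<alpha>) x / gg_cdf a b \<alpha> x"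
      unfolding ratio_d[OF A x0] ratio_d[OF A y0] Gx_def Gy_def .
  qed
qed

end
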